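(* Consider the nonatomic game with tolls, in which a class-$l$ mobile at BS $j$ incurs cost density $\bar c_{lj}(\mathbf{m})=c_{lj}(\mathbf{m})+t_{lj}(\mathbf{m})$, where $t_{lj}(\mathbf{m})=\gamma_l\sum_{i=1}^L m_{ij}g_{ij}c'(m_j)$. This game is a potential game with potential function $C(\mathbf{m})=\sum_{j\in\mathcal{N}}\sum_{l=1}^L m_{lj}g_{lj}c(m_j)$, in the sense that $\partial C(\mathbf{m})/\partial m_{lj}=\bar c_{lj}(\mathbf{m})$ for all $l,j$ on the region $\{\mathbf{m}: m_j<1\ \forall j\}$. Furthermore, a congestion profile is system optimal (minimizes $C$ over all congestion profiles) only if it is a Nash equilibrium of this game with tolls.
   Context: Nonatomic model: classes $\mathcal{L}=\{1,\dots,L\}$ of nonatomic mobiles, class $l$ having total mass $M_l>0$, target SINR density $\gamma_l>0$ and power gain $h_{lj}>0$ to BS $j\in\mathcal{N}=\{1,\dots,N\}$; noise power $\sigma^2>0$. A congestion profile is $\mathbf{m}=(m_{lj})$ with $m_{lj}\ge0$, $\sum_j m_{lj}=M_l$. Set $m_j=\sum_l\gamma_l m_{lj}$, $g_{lj}=\gamma_l\sigma^2/h_{lj}$, $c(z)=1/(1-z)$ for $z<1$ and $c(z)=\infty$ for $z\ge1$, $c'(z)=1/(1-z)^2$ for $z<1$ and $c'(z)=\infty$ for $z\ge1$; $c_{lj}(\mathbf{m})=g_{lj}c(m_j)$. $\mathbf{m}$ is a Nash equilibrium of the game with costs $\bar c_{lj}$ if for all $l,j$, $m_{lj}>0$ implies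 $\bar c_{lj}(\mathbf{m})\le \bar c_{lk}(\mathbf{m})$ for all $k$. Standing feasibility assumption: $\sum_l\gamma_l M_l<N$. *)

theory Defs
  imports "HOL-Analysis.Analysis" "HOL-Library.Extended_Real"
begin

text \<open>Classes are indexed by 1..L, base stations by 1..N; a congestion profile
is a function m :: nat => nat => real with m l j the mass of class l at BS j.
Costs that may be infinite are extended reals.\<close>

definition cfun :: "real \<Rightarrow> ereal" where
  "cfun z = (if z < 1 then ereal (1 / (1 - z)) else \<infinity>)"

definition cfun' :: "real \<Rightarrow> ereal" where
  "cfun' z = (if z < 1 then ereal (1 / (1 - z)^2) else \<infinity>)"

definition load :: "nat \<Rightarrow> (nat \<Rightarrow> real) \<Rightarrow> (nat \<Rightarrow> nat \<Rightarrow> real) \<Rightarrow> nat \<Rightarrow> real" where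
  "load L \<gamma> m j = (\<Sum>l\<in>{1..L}. \<gamma> l * m l j)"

definition gcoef :: "(nat \<Rightarrow> real) \<Rightarrow> real \<Rightarrow> (nat \<Rightarrow> nat \<Rightarrow> real) \<Rightarrow> nat \<Rightarrow> nat \<Rightarrow> real" where
  "gcoef \<gamma> \<sigma>2 h l j = \<gamma> l * \<sigma>2 / h l j"

definition is_profile :: "nat \<Rightarrow> nat \<Rightarrow> (nat \<Rightarrow> real) \<Rightarrow> (nat \<Rightarrow> nat \<Rightarrow> real) \<Rightarrow> bool" where
  "is_profile L N M m \<longleftrightarrow>
     (\<forall>l\<in>{1..L}. \<forall>j\<in>{1..N}. 0 \<le> m l j) \<and> (\<forall>l\<in>{1..L}. (\<Sum>j\<in>{1..N}. m l j) = M l)"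

definition cost :: "nat \<Rightarrow> (nat \<Rightarrow> real) \<Rightarrow> real \<Rightarrow> (nat \<Rightarrow> nat \<Rightarrow> real)
                    \<Rightarrow> (nat \<Rightarrow> nat \<Rightarrow> real) \<Rightarrow> nat \<Rightarrow> nat \<Rightarrow> ereal" where
  "cost L \<gamma> \<sigma>2 h m l j = ereal (gcoef \<gamma> \<sigma>2 h l j) * cfun (load L \<gamma> m j)"

definition toll :: "nat \<Rightarrow> (nat \<Rightarrow> real) \<Rightarrow> real \<Rightarrow> (nat \<Rightarrow> nat \<Rightarrow> real)
                    \<Rightarrow> (nat \<Rightarrow> nat \<Rightarrow> real) \<Rightarrow> nat \<Rightarrow> nat \<Rightarrow> ereal" where
  "toll L \<gamma> \<sigma>2 h m l j =
     ereal (\<gamma> l) * (\<Sum>i\<in>{1..L}. ereal (m i j * gcoef \<gamma> \<sigma>2 h i j) * cfun' (load L \<gamma> m j))"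

definition tolled_cost :: "nat \<Rightarrow> (nat \<Rightarrow> real) \<Rightarrow> real \<Rightarrow> (nat \<Rightarrow> nat \<Rightarrow> real)
                    \<Rightarrow> (nat \<Rightarrow> nat \<Rightarrow> real) \<Rightarrow> nat \<Rightarrow> nat \<Rightarrow> ereal" where
  "tolled_cost L \<gamma> \<sigma>2 h m l j = cost L \<gamma> \<sigma>2 h m l j + toll L \<gamma> \<sigma>2 h m l j"

definition social_cost :: "nat \<Rightarrow> nat \<Rightarrow> (nat \<Rightarrow> real) \<Rightarrow> real \<Rightarrow> (nat \<Rightarrow> nat \<Rightarrow> real)
                    \<Rightarrow> (nat \<Rightarrow> nat \<Rightarrow> real) \<Rightarrow> ereal" where
  "social_cost L N \<gamma> \<sigma>2 h m =
     (\<Sum>j\<in>{1..N}. \<Sum>l\<in>{1..L}. ereal (m l j * gcoef \<gamma> \<sigma>2 h l j) * cfun (load L \<gamma> m j))"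

definition is_nash :: "nat \<Rightarrow> nat \<Rightarrow> (nat \<Rightarrow> real) \<Rightarrow> (nat \<Rightarrow> nat \<Rightarrow> real)
                       \<Rightarrow> (nat \<Rightarrow> nat \<Rightarrow> ereal) \<Rightarrow> bool" where
  "is_nash L N M m cb \<longleftrightarrow> is_profile L N M m \<and>
     (\<forall>l\<in>{1..L}. \<forall>j\<in>{1..N}. m l j > 0 \<longrightarrow> (\<forall>k\<in>{1..N}. cb l j \<le> cb l k))"

end

theory Submission
  imports Defs
begin


definition realF :: "nat \<Rightarrow> nat \<Rightarrow> (nat \<Rightarrow> real) \<Rightarrow> (nat \<Rightarrow> nat \<Rightarrow> real) \<Rightarrow> (nat \<Rightarrow> nat \<Rightarrow> real) \<Rightarrow> real" where
  "realF L N \<gamma> g m = (\<Sum>j\<in>{1..N}. (\<Sum>i\<in>{1..L}. m i j * g i j) / (1 - load L \<gamma> m j))"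

definition Dd :: "nat \<Rightarrow> nat \<Rightarrow> (nat \<Rightarrow> real) \<Rightarrow> (nat \<Rightarrow> nat \<Rightarrow> real) \<Rightarrow> (nat \<Rightarrow> nat \<Rightarrow> real) \<Rightarrow> (nat \<Rightarrow> nat \<Rightarrow> real) \<Rightarrow> real" where
  "Dd L N \<gamma> g m d = (\<Sum>j\<in>{1..N}. (\<Sum>i\<in>{1..L}. d i j * g i j) / (1 - load L \<gamma> m j)
      + (\<Sum>i\<in>{1..L}. m i j * g i j) * load L \<gamma> d j / (1 - load L \<gamma> m j)^2)"

lemma load_lin: "load L \<gamma> (\<lambda>i j. m i j + s * d i j) j = load L \<gamma> m j + s * load L \<gamma> d j"
  unfolding load_def by (simp add: algebra_simps sum.distrib sum_distrib_left)

lemma sum_lin: fixes m d g :: "nat \<Rightarrow> nat \<Rightarrow> real" shows "(\<Sum>i\<in>A. (m i j + s * d i j) * g i j) = (\<Sum>i\<in>A. m i j * g i j) + s * (\<Sum>i\<in>A. d i j * g i j)"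
  proof -
  have "(\<Sum>i\<in>A. (m i j + s * d i j) * g i j) = (\<Sum>i\<in>A. m i j * g i j + s * (d i j * g i j))"
    by (rule sum.cong) (auto simp: algebra_simps)
  thus ?thesis by (simp add: sum.distrib sum_distrib_left)
qed

lemma deriv_term:
  fixes a b l c t0 :: real
  assumes "l < 1"
  shows "((\<lambda>t. (a + (t - t0) * b) / (1 - (l + (t - t0) * c))) has_real_derivative
           b / (1 - l) + a * c / (1 - l)^2) (at t0)"
proof -
  have f: "((\<lambda>t. a + (t - t0) * b) has_real_derivative b) (at t0)"
    by (rule derivative_eq_intros refl | simp)+
  have g: "((\<lambda>t. 1 - (l + (t - t0) * c)) has_real_derivative - c) (at t0)"
    by (rule derivative_eq_intros refl | simp)+
  have u: "1 - l \<noteq> 0" using assms by simp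
  have "((\<lambda>t. (a + (t - t0) * b) / (1 - (l + (t - t0) * c))) has_real_derivative
     (b * (1 - l) - a * (- c)) / ((1 - l) * (1 - l))) (at t0)"
    using DERIV_divide[OF f g] u by simp
  moreover have "(b * (1 - l) - a * (- c)) / ((1 - l) * (1 - l)) = b / (1 - l) + a * c / (1 - l)^2"
  proof -
    define u where "u = 1 - l"
    have "u \<noteq> 0" using assms u_def by simp
    then show ?thesis unfolding u_def[symmetric] by (simp add: field_simps power2_eq_square)
  qed
  ultimately show ?thesis by simp
qed

lemma deriv_F:
  assumes "\<forall>j\<in>{1..N}. load L \<gamma> m j < 1"
  shows "((\<lambda>t. realF L N \<gamma> g (\<lambda>i j. m i j + (t - t0) * d i j)) has_real_derivative Dd L N \<gamma> g m d) (at t0)"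
proof -
  have eq: "(\<lambda>t. realF L N \<gamma> g (\<lambda>i j. m i j + (t - t0) * d i j)) =
     (\<lambda>t. \<Sum>j\<in>{1..N}. ((\<Sum>i\<in>{1..L}. m i j * g i j) + (t - t0) * (\<Sum>i\<in>{1..L}. d i j * g i j))
          / (1 - (load L \<gamma> m j + (t - t0) * load L \<gamma> d j)))"
    unfolding realF_def load_lin sum_lin by simp
  show ?thesis unfolding eq Dd_def
    apply (rule DERIV_sum)
    apply (rule deriv_term)
    using assms by auto
qed


definition Tc :: "nat \<Rightarrow> (nat \<Rightarrow> real) \<Rightarrow> (nat \<Rightarrow> nat \<Rightarrow> real) \<Rightarrow> (nat \<Rightarrow> nat \<Rightarrow> real) \<Rightarrow> nat \<Rightarrow> nat \<Rightarrow> real" where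
  "Tc L \<gamma> g m l j = g l j / (1 - load L \<gamma> m j) + \<gamma> l * (\<Sum>i\<in>{1..L}. m i j * g i j) / (1 - load L \<gamma> m j)^2"

lemma soc_real:
  assumes "\<forall>j\<in>{1..N}. load L \<gamma> m j < 1"
  shows "social_cost L N \<gamma> \<sigma>2 h m = ereal (realF L N \<gamma> (gcoef \<gamma> \<sigma>2 h) m)"
proof -
  have "social_cost L N \<gamma> \<sigma>2 h m =
     (\<Sum>j\<in>{1..N}. \<Sum>l\<in>{1..L}. ereal (m l j * gcoef \<gamma> \<sigma>2 h l j / (1 - load L \<gamma> m j)))"
    unfolding social_cost_def
    by (rule sum.cong[OF refl], rule sum.cong[OF refl]) (use assms in \<open>auto simp: cfun_def\<close>)
  also have "\<dots> = ereal (realF L N \<gamma> (gcoef \<gamma> \<sigma>2 h) m)"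
    unfolding realF_def by (simp add: sum_divide_distrib)
  finally show ?thesis .
qed

lemma tolled_real:
  assumes "load L \<gamma> m j < 1"
  shows "tolled_cost L \<gamma> \<sigma>2 h m l j = ereal (Tc L \<gamma> (gcoef \<gamma> \<sigma>2 h) m l j)"
proof -
  have "toll L \<gamma> \<sigma>2 h m l j = ereal (\<gamma> l * (\<Sum>i\<in>{1..L}. m i j * gcoef \<gamma> \<sigma>2 h i j * (1 / (1 - load L \<gamma> m j)^2)))"
    unfolding toll_def cfun'_def using assms by simp
  moreover have "cost L \<gamma> \<sigma>2 h m l j = ereal (gcoef \<gamma> \<sigma>2 h l j * (1 / (1 - load L \<gamma> m j)))"
    unfolding cost_def cfun_def using assms by simp
  ultimately show ?thesis unfolding tolled_cost_def Tc_def
    by (simp add: sum_divide_distrib[symmetric])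
qed

lemma sum_ind1:
  fixes f :: "nat \<Rightarrow> real"
  assumes "l \<in> A" "finite A"
  shows "(\<Sum>i\<in>A. f i * (if i = l \<and> P then 1 else 0)) = (if P then f l else 0)"
proof -
  have "(\<Sum>i\<in>A. f i * (if i = l \<and> P then 1 else 0)) = (\<Sum>i\<in>A. if i = l then (if P then f l else 0) else 0)"
    by (rule sum.cong) auto
  thus ?thesis using assms by simp
qed

lemma sum_ind2:
  fixes f :: "nat \<Rightarrow> real"
  assumes "l \<in> A" "finite A"
  shows "(\<Sum>i\<in>A. (if i = l \<and> P then 1 else 0) * f i) = (if P then f l else 0)"
proof -
  have "(\<Sum>i\<in>A. (if i = l \<and> P then 1 else 0) * f i) = (\<Sum>i\<in>A. if i = l then (if P then f l else 0) else 0)"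
    by (rule sum.cong) auto
  thus ?thesis using assms by simp
qed

lemma Dd_unit:
  assumes "l \<in> {1..L}" "j \<in> {1..N}"
  shows "Dd L N \<gamma> g m (\<lambda>i j'. if i = l \<and> j' = j then 1 else 0) = Tc L \<gamma> g m l j"
proof -
  have ld: "load L \<gamma> (\<lambda>i j'. if i = l \<and> j' = j then 1 else 0) j' = (if j' = j then \<gamma> l else 0)" for j'
    unfolding load_def using sum_ind1[where l=l and A="{1..L}" and f=\<gamma> and P="j' = j"] assms by simp
  have sg: "(\<Sum>i\<in>{1..L}. (if i = l \<and> j' = j then 1 else 0) * g i j') = (if j' = j then g l j else 0)" for j'
    using sum_ind2[where l=l and A="{1..L}" and f="\<lambda>i. g i j'" and P="j' = j"] assms by simp
  have "Dd L N \<gamma> g m (\<lambda>i j'. if i = l \<and> j' = j then 1 else 0) =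
     (\<Sum>j'\<in>{1..N}. if j' = j then Tc L \<gamma> g m l j else 0)"
    unfolding Dd_def ld sg by (rule sum.cong) (auto simp: Tc_def)
  also have "\<dots> = Tc L \<gamma> g m l j" using assms by (simp add: sum.delta)
  finally show ?thesis .
qed

lemma Dd_diff: "Dd L N \<gamma> g m (\<lambda>i j. d1 i j - d2 i j) = Dd L N \<gamma> g m d1 - Dd L N \<gamma> g m d2"
proof -
  have l: "load L \<gamma> (\<lambda>i j. d1 i j - d2 i j) j = load L \<gamma> d1 j - load L \<gamma> d2 j" for j
    unfolding load_def by (simp add: algebra_simps sum_subtractf)
  have s: "(\<Sum>i\<in>{1..L}. (d1 i j - d2 i j) * g i j) = (\<Sum>i\<in>{1..L}. d1 i j * g i j) - (\<Sum>i\<in>{1..L}. d2 i j * g i j)" for j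
    by (simp add: left_diff_distrib sum_subtractf)
  show ?thesis unfolding Dd_def l s sum_subtractf[symmetric]
    by (rule sum.cong) (simp_all add: diff_divide_distrib left_diff_distrib right_diff_distrib sum_subtractf)
qed


lemma part1:
  assumes loads: "\<forall>j\<in>{1..N}. load L \<gamma> m j < 1" and l: "l \<in> {1..L}" and j: "j \<in> {1..N}"
  shows "((\<lambda>x. real_of_ereal (social_cost L N \<gamma> \<sigma>2 h (m(l := (m l)(j := x)))))
                  has_real_derivative real_of_ereal (tolled_cost L \<gamma> \<sigma>2 h m l j)) (at (m l j))"
proof -
  define d where "d = (\<lambda>i j'. if i = l \<and> j' = j then (1::real) else 0)"
  define g where "g = gcoef \<gamma> \<sigma>2 h"
  have upd: "m(l := (m l)(j := x)) = (\<lambda>i j'. m i j' + (x - m l j) * d i j')" for x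
    by (auto simp: d_def fun_eq_iff)
  have ld: "load L \<gamma> d j' = (if j' = j then \<gamma> l else 0)" for j'
    unfolding load_def d_def using sum_ind1[where l=l and A="{1..L}" and f=\<gamma> and P="j' = j"] l by simp
  let ?S = "{x. load L \<gamma> m j + (x - m l j) * \<gamma> l < 1}"
  have op: "open ?S" by (rule open_Collect_less) (intro continuous_intros)+
  have mem: "m l j \<in> ?S" using loads j by simp
  have D: "((\<lambda>x. realF L N \<gamma> g (\<lambda>i j'. m i j' + (x - m l j) * d i j')) has_real_derivative Tc L \<gamma> g m l j) (at (m l j))"
    using deriv_F[OF loads, of g "m l j" d] Dd_unit[OF l j, of \<gamma> g m] by (simp add: d_def)
  have TT: "real_of_ereal (tolled_cost L \<gamma> \<sigma>2 h m l j) = Tc L \<gamma> g m l j"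
    using tolled_real[of L \<gamma> m j \<sigma>2 h l] loads j by (simp add: g_def)
  show ?thesis unfolding TT
  proof (rule has_field_derivative_transform_within_open[OF D op mem])
    fix x assume "x \<in> ?S"
    then have "\<forall>j'\<in>{1..N}. load L \<gamma> (\<lambda>i j'. m i j' + (x - m l j) * d i j') j' < 1"
      using loads by (auto simp: load_lin ld)
    then show "realF L N \<gamma> g (\<lambda>i j'. m i j' + (x - m l j) * d i j') =
        real_of_ereal (social_cost L N \<gamma> \<sigma>2 h (m(l := (m l)(j := x))))"
      by (simp add: upd soc_real g_def)
  qed
qed


lemma mem_le_sum':
  fixes f :: "_ \<Rightarrow> 'b::ordered_comm_monoid_add"
  assumes "i \<in> A" "finite A" "\<forall>x\<in>A. 0 \<le> f x"
  shows "f i \<le> sum f A"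
proof -
  have "sum f A = f i + sum f (A - {i})" using assms by (simp add: sum.remove)
  moreover have "0 \<le> sum f (A - {i})" using assms by (intro sum_nonneg) auto
  ultimately show ?thesis by (simp add: add_increasing2)
qed

lemma cfun_nonneg: "cfun z \<ge> 0"
  unfolding cfun_def by auto

lemma part2:
  fixes L N :: nat and M \<gamma> :: "nat \<Rightarrow> real" and h :: "nat \<Rightarrow> nat \<Rightarrow> real" and \<sigma>2 :: real
  assumes M_pos: "\<forall>l\<in>{1..L}. M l > 0"
      and \<gamma>_pos: "\<forall>l\<in>{1..L}. \<gamma> l > 0"
      and h_pos: "\<forall>l\<in>{1..L}. \<forall>j\<in>{1..N}. h l j > 0"
      and \<sigma>_pos: "\<sigma>2 > 0"
      and feasible: "(\<Sum>l\<in>{1..L}. \<gamma> l * M l) < real N"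
      and prof: "is_profile L N M m"
      and minm: "\<forall>m'. is_profile L N M m' \<longrightarrow> social_cost L N \<gamma> \<sigma>2 h m \<le> social_cost L N \<gamma> \<sigma>2 h m'"
  shows "is_nash L N M m (tolled_cost L \<gamma> \<sigma>2 h m)"
proof -
  define g where "g = gcoef \<gamma> \<sigma>2 h"
  have gpos: "g i j > 0" if "i \<in> {1..L}" "j \<in> {1..N}" for i j
    using that \<gamma>_pos h_pos \<sigma>_pos by (simp add: g_def gcoef_def)
  have mnn: "m i j \<ge> 0" if "i \<in> {1..L}" "j \<in> {1..N}" for i j
    using prof that by (simp add: is_profile_def)
  have msum: "(\<Sum>j\<in>{1..N}. m i j) = M i" if "i \<in> {1..L}" for i
    using prof that by (simp add: is_profile_def)
  have "(\<Sum>l\<in>{1..L}. \<gamma> l * M l) \<ge> 0"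
    using M_pos \<gamma>_pos by (intro sum_nonneg) (simp add: less_imp_le)
  with feasible have Npos: "real N > 0" by linarith
  define u where "u = (\<lambda>i (j::nat). M i / real N)"
  have uprof: "is_profile L N M u"
    unfolding is_profile_def u_def using M_pos Npos by (auto simp: less_imp_le)
  have uload: "\<forall>j\<in>{1..N}. load L \<gamma> u j < 1"
  proof
    fix j
    have "load L \<gamma> u j = (\<Sum>l\<in>{1..L}. \<gamma> l * M l) / real N"
      unfolding load_def u_def by (simp add: sum_divide_distrib)
    also have "\<dots> < 1" using feasible Npos by simp
    finally show "load L \<gamma> u j < 1" .
  qed
  have ufin: "social_cost L N \<gamma> \<sigma>2 h m \<le> ereal (realF L N \<gamma> g u)"
    using minm uprof soc_real[OF uload, of \<sigma>2 h] unfolding g_def by metis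
  have loads: "\<forall>j\<in>{1..N}. load L \<gamma> m j < 1"
  proof (rule ccontr)
    assume "\<not> ?thesis"
    then obtain j where j: "j \<in> {1..N}" and lj: "load L \<gamma> m j \<ge> 1" by force
    have "\<exists>i\<in>{1..L}. m i j > 0"
    proof (rule ccontr)
      assume "\<not> ?thesis"
      then have "\<forall>i\<in>{1..L}. m i j = 0" using mnn j by force
      then have "load L \<gamma> m j = 0" unfolding load_def by simp
      with lj show False by simp
    qed
    then obtain i where i: "i \<in> {1..L}" and mij: "m i j > 0" by blast
    have trm: "ereal (m i j * g i j) * cfun (load L \<gamma> m j) = \<infinity>"
      using lj mij gpos[OF i j] by (simp add: cfun_def)
    have nn: "0 \<le> ereal (m i' j' * g i' j') * cfun (load L \<gamma> m j')" if "i' \<in> {1..L}" "j' \<in> {1..N}" for i' j'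
      using mnn[OF that] gpos[OF that] cfun_nonneg by (simp add: less_imp_le)
    have "\<infinity> \<le> (\<Sum>i'\<in>{1..L}. ereal (m i' j * g i' j) * cfun (load L \<gamma> m j))"
      unfolding trm[symmetric] by (rule mem_le_sum'[OF i, where f="\<lambda>i'. ereal (m i' j * g i' j) * cfun (load L \<gamma> m j)"]) (use nn j in auto)
    also have "\<dots> \<le> (\<Sum>j'\<in>{1..N}. \<Sum>i'\<in>{1..L}. ereal (m i' j' * g i' j') * cfun (load L \<gamma> m j'))"
      by (rule mem_le_sum'[OF j, where f="\<lambda>j'. \<Sum>i'\<in>{1..L}. ereal (m i' j' * g i' j') * cfun (load L \<gamma> m j')"])
         (use nn in \<open>auto intro!: sum_nonneg\<close>)
    also have "\<dots> = social_cost L N \<gamma> \<sigma>2 h m" by (simp add: social_cost_def g_def)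
    also have "\<dots> \<le> ereal (realF L N \<gamma> g u)" by (rule ufin)
    finally show False by simp
  qed
  have main: "Tc L \<gamma> g m l j \<le> Tc L \<gamma> g m l k"
    if l: "l \<in> {1..L}" and j: "j \<in> {1..N}" and k: "k \<in> {1..N}" and mlj: "m l j > 0" and kj: "k \<noteq> j" for l j k
  proof (rule ccontr)
    assume "\<not> ?thesis"
    then have lt: "Tc L \<gamma> g m l k - Tc L \<gamma> g m l j < 0" by simp
    define d where "d = (\<lambda>i j'. (if i = l \<and> j' = k then 1 else 0) - (if i = l \<and> j' = j then (1::real) else 0))"
    have Dd: "Dd L N \<gamma> g m d = Tc L \<gamma> g m l k - Tc L \<gamma> g m l j"
      unfolding d_def Dd_diff Dd_unit[OF l k] Dd_unit[OF l j] ..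
    define \<phi> where "\<phi> = (\<lambda>t. realF L N \<gamma> g (\<lambda>i j'. m i j' + (t - 0) * d i j'))"
    have der: "(\<phi> has_real_derivative Dd L N \<gamma> g m d) (at 0)"
      unfolding \<phi>_def by (rule deriv_F[OF loads])
    obtain \<delta> where \<delta>: "\<delta> > 0" and dec: "\<forall>t>0. t < \<delta> \<longrightarrow> \<phi> 0 > \<phi> (0 + t)"
      using DERIV_neg_dec_right[OF der] lt Dd by auto
    define \<mu> where "\<mu> = Min ((\<lambda>j'. 1 - load L \<gamma> m j') ` {1..N})"
    have \<mu>pos: "\<mu> > 0" unfolding \<mu>_def using loads j by (subst Min_gr_iff) auto
    have \<mu>le: "\<mu> \<le> 1 - load L \<gamma> m j'" if "j' \<in> {1..N}" for j'
      unfolding \<mu>_def using that by (intro Min_le) auto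
    have gl: "\<gamma> l > 0" using \<gamma>_pos l by simp
    define t where "t = min (\<delta>/2) (min (m l j) (\<mu> / (2 * \<gamma> l)))"
    have tpos: "t > 0" unfolding t_def using \<delta> mlj \<mu>pos gl by simp
    have tlt: "t < \<delta>" unfolding t_def using \<delta> by simp
    have tle: "t \<le> m l j" unfolding t_def by simp
    have tg: "t * \<gamma> l \<le> \<mu> / 2"
    proof -
      have "t \<le> \<mu> / (2 * \<gamma> l)" unfolding t_def by simp
      then have "t * \<gamma> l \<le> \<mu> / (2 * \<gamma> l) * \<gamma> l" using gl by (intro mult_right_mono) auto
      also have "\<dots> = \<mu> / 2" using gl by simp
      finally show ?thesis .
    qed
    define p where "p = (\<lambda>i j'. m i j' + (t - 0) * d i j')"
    have ld: "load L \<gamma> d j' \<le> \<gamma> l" for j'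
    proof -
      have "load L \<gamma> d j' = load L \<gamma> (\<lambda>i j'. if i = l \<and> j' = k then 1 else 0) j' - load L \<gamma> (\<lambda>i j'. if i = l \<and> j' = j then 1 else 0) j'"
        unfolding load_def d_def by (simp add: right_diff_distrib sum_subtractf)
      also have "\<dots> = (if j' = k then \<gamma> l else 0) - (if j' = j then \<gamma> l else 0)"
        unfolding load_def using sum_ind1[where l=l and A="{1..L}" and f=\<gamma> and P="j' = k"]
          sum_ind1[where l=l and A="{1..L}" and f=\<gamma> and P="j' = j"] l by simp
      finally show ?thesis using gl by auto
    qed
    have ploads: "\<forall>j'\<in>{1..N}. load L \<gamma> p j' < 1"
    proof
      fix j' assume j': "j' \<in> {1..N}"
      have "load L \<gamma> p j' = load L \<gamma> m j' + t * load L \<gamma> d j'" unfolding p_def load_lin by simp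
      also have "\<dots> \<le> load L \<gamma> m j' + t * \<gamma> l" using ld[of j'] tpos by (simp add: mult_left_mono)
      also have "\<dots> < 1" using tg \<mu>le[OF j'] \<mu>pos by linarith
      finally show "load L \<gamma> p j' < 1" .
    qed
    have dsum: "(\<Sum>j'\<in>{1..N}. d i j') = 0" for i
    proof (cases "i = l")
      case True then show ?thesis using j k by (simp add: d_def sum_subtractf)
    next
      case False then show ?thesis by (simp add: d_def)
    qed
    have pprof: "is_profile L N M p"
      unfolding is_profile_def
    proof (intro conjI ballI)
      fix i j' assume i: "i \<in> {1..L}" and j': "j' \<in> {1..N}"
      show "0 \<le> p i j'"
        using mnn[OF i j'] tle tpos kj by (auto simp: p_def d_def)
    next
      fix i assume i: "i \<in> {1..L}"
      have "(\<Sum>j'\<in>{1..N}. p i j') = (\<Sum>j'\<in>{1..N}. m i j') + t * (\<Sum>j'\<in>{1..N}. d i j')"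
        unfolding p_def by (simp add: sum.distrib sum_distrib_left)
      then show "(\<Sum>j'\<in>{1..N}. p i j') = M i" using msum[OF i] dsum by simp
    qed
    have "social_cost L N \<gamma> \<sigma>2 h p = ereal (\<phi> t)"
      using soc_real[OF ploads] by (simp add: g_def \<phi>_def p_def)
    moreover have "social_cost L N \<gamma> \<sigma>2 h m = ereal (\<phi> 0)"
      using soc_real[OF loads] by (simp add: g_def \<phi>_def)
    moreover have "\<phi> t < \<phi> 0" using dec tpos tlt by auto
    moreover have "social_cost L N \<gamma> \<sigma>2 h m \<le> social_cost L N \<gamma> \<sigma>2 h p" using minm pprof by simp
    ultimately show False by simp
  qed
  show ?thesis unfolding is_nash_def
  proof (intro conjI ballI impI prof)
    fix l j k assume l: "l \<in> {1..L}" and j: "j \<in> {1..N}" and mlj: "m l j > 0" and k: "k \<in> {1..N}"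
    show "tolled_cost L \<gamma> \<sigma>2 h m l j \<le> tolled_cost L \<gamma> \<sigma>2 h m l k"
    proof (cases "k = j")
      case True then show ?thesis by simp
    next
      case False
      then show ?thesis using main[OF l j k mlj False] tolled_real[of L \<gamma> m j] tolled_real[of L \<gamma> m k] loads j k
        by (simp add: g_def)
    qed
  qed
qed


theorem proposition12:
  fixes L N :: nat and M \<gamma> :: "nat \<Rightarrow> real" and h :: "nat \<Rightarrow> nat \<Rightarrow> real" and \<sigma>2 :: real
  assumes M_pos: "\<forall>l\<in>{1..L}. M l > 0"
      and \<gamma>_pos: "\<forall>l\<in>{1..L}. \<gamma> l > 0"
      and h_pos: "\<forall>l\<in>{1..L}. \<forall>j\<in>{1..N}. h l j > 0"
      and \<sigma>_pos: "\<sigma>2 > 0"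
      and feasible: "(\<Sum>l\<in>{1..L}. \<gamma> l * M l) < real N"
  shows "(\<forall>m :: nat \<Rightarrow> nat \<Rightarrow> real. (\<forall>j\<in>{1..N}. load L \<gamma> m j < 1) \<longrightarrow>
            (\<forall>l\<in>{1..L}. \<forall>j\<in>{1..N}.
               ((\<lambda>x. real_of_ereal (social_cost L N \<gamma> \<sigma>2 h (m(l := (m l)(j := x)))))
                  has_real_derivative real_of_ereal (tolled_cost L \<gamma> \<sigma>2 h m l j)) (at (m l j))))
       \<and> (\<forall>m :: nat \<Rightarrow> nat \<Rightarrow> real. is_profile L N M m \<and>
            (\<forall>m'. is_profile L N M m' \<longrightarrow> social_cost L N \<gamma> \<sigma>2 h m \<le> social_cost L N \<gamma> \<sigma>2 h m')
            \<longrightarrow> is_nash L N M m (tolled_cost L \<gamma> \<sigma>2 h m))"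
    using part1 part2[OF M_pos \<gamma>_pos h_pos \<sigma>_pos feasible] by blast

end
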